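(* Let $k,n_1,n_2,\nu\in\mathbb{Z}_{\ge1}$, $F\in\mathbb{C}^{\nu\times\nu}$, $R_1,\dots,R_k\in\mathbb{C}^{n_1\times n_2}$, and $q_1,\dots,q_k$ polynomials with real coefficients. Define the linear maps $$\mathcal{H}_{\rm p}:\mathbb{C}^{n_2\times\nu}\to\mathbb{C}^{n_1\times\nu},\ \mathcal{H}_{\rm p}(X)=\sum_{i=1}^kR_iXq_i(F),\qquad \mathcal{H}_{\rm d}:\mathbb{C}^{\nu\times n_1}\to\mathbb{C}^{\nu\times n_2},\ \mathcal{H}_{\rm d}(Y)=\sum_{i=1}^kq_i(F)YR_i,$$ and the polynomial matrix $R(\lambda)=\sum_{i=1}^kR_iq_i(\lambda)\in\mathbb{C}^{n_1\times n_2}$. Then: (i) $\mathcal{H}_{\rm p}$ is surjective if and only if $R(\lambda)$ has full row rank for all $\lambda\in\mathrm{eig}(F)$, and $\mathcal{H}_{\rm p}$ is injective if and only if $R(\lambda)$ has full column rank for all $\lambda\in\mathrm{eig}(F)$; (ii) $\mathcal{H}_{\rm d}$ is surjective if and only if $R(\lambda)$ has full column rank for all $\lambda\in\mathrm{eig}(F)$, and $\mathcal{H}_{\rm d}$ is injective if and only if $R(\lambda)$ has full row rank for all $\lambda\in\mathrm{eig}(F)$.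
   Context: $q_i(F)$ denotes substitution of the matrix $F$ into the polynomial $q_i$. *)

theory Defs
  imports "HOL-Analysis.Analysis" "HOL-Computational_Algebra.Polynomial"
begin

text \<open>Scalar multiple of a complex matrix.\<close>
definition smat :: "complex \<Rightarrow> complex^'n^'m \<Rightarrow> complex^'n^'m" where
  "smat c A = (\<chi> a b. c * A $ a $ b)"

text \<open>Matrix power F^j (F^0 = identity).\<close>
definition matpow :: "complex^'n^'n \<Rightarrow> nat \<Rightarrow> complex^'n^'n" where
  "matpow F j = (((**) F) ^^ j) (mat 1)"

text \<open>Substitution of a square complex matrix into a real polynomial: q(F).\<close>
definition poly_mat :: "real poly \<Rightarrow> complex^'n^'n \<Rightarrow> complex^'n^'n" where
  "poly_mat q F = (\<Sum>j\<le>degree q. smat (complex_of_real (coeff q j)) (matpow F j))"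

text \<open>Eigenvalues of a square complex matrix.\<close>
definition eig :: "complex^'n^'n \<Rightarrow> complex set" where
  "eig F = {l. \<exists>v. v \<noteq> 0 \<and> F *v v = l *s v}"

end

theory Submission
  imports Defs "HOL-Computational_Algebra.Fundamental_Theorem_Algebra"
begin


lemma smat_mult_left: "smat c (A ** B) = smat c A ** B"
  by (simp add: smat_def matrix_matrix_mult_def vec_eq_iff sum_distrib_left mult.assoc)
lemma smat_mult_right: "smat c (A ** B) = A ** smat c B"
  by (simp add: smat_def matrix_matrix_mult_def vec_eq_iff sum_distrib_left mult.left_commute)
lemma smat_add: "smat c (A + B) = smat c A + smat c B"
  by (simp add: smat_def vec_eq_iff distrib_left)
lemma smat_add2: "smat (c + d) A = smat c A + smat d A"
  by (simp add: smat_def vec_eq_iff distrib_right)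
lemma smat_0[simp]: "smat 0 A = 0" and smat_0'[simp]: "smat c 0 = 0"
  by (simp_all add: smat_def vec_eq_iff)
lemma smat_1[simp]: "smat 1 A = A"
  by (simp add: smat_def vec_eq_iff)
lemma smat_smat: "smat c (smat d A) = smat (c*d) A"
  by (simp add: smat_def vec_eq_iff mult.assoc)
lemma smat_of_real: "smat (complex_of_real r) A = r *\<^sub>R A"
  by (auto simp: smat_def vec_eq_iff complex_eq_iff)
lemma smat_sum: "smat c (sum f S) = sum (\<lambda>x. smat c (f x)) S"
  by (induction S rule: infinite_finite_induct) (auto simp: smat_add)
lemma smat_diff: "smat c (A - B) = smat c A - smat c B"
  by (simp add: smat_def vec_eq_iff right_diff_distrib)
lemma smat_eq0: "smat c A = 0 \<longleftrightarrow> c = 0 \<or> A = 0"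
  by (auto simp: smat_def vec_eq_iff)

lemma matrix_add_rdistrib: "((B + C) ** A) = (B ** A) + (C ** A)"
  by (vector matrix_matrix_mult_def sum.distrib[symmetric] field_simps)
lemma matrix_diff_ldistrib: "((A::'a::comm_ring_1^_^_) ** (B - C)) = (A ** B) - (A ** C)"
  by (vector matrix_matrix_mult_def sum_subtractf[symmetric] field_simps)
lemma matrix_diff_rdistrib: "((B - C) ** (A::'a::comm_ring_1^_^_)) = (B ** A) - (C ** A)"
  by (vector matrix_matrix_mult_def sum_subtractf[symmetric] field_simps)

lemma mmul_sum_right: "(A::'a::comm_semiring_1^_^_) ** sum f S = sum (\<lambda>x. A ** f x) S"
  by (induction S rule: infinite_finite_induct) (auto simp: matrix_add_ldistrib)
lemma mmul_sum_left: "sum f S ** (A::'a::comm_semiring_1^_^_) = sum (\<lambda>x. f x ** A) S"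
  by (induction S rule: infinite_finite_induct) (auto simp: matrix_add_rdistrib)

lemma transpose_smat: "transpose (smat c A) = smat c (transpose A)"
  by (simp add: smat_def transpose_def vec_eq_iff)




definition cev :: "complex poly \<Rightarrow> complex^'n^'n \<Rightarrow> complex^'n^'n" where
  "cev p G = (\<Sum>j\<le>degree p. smat (coeff p j) (matpow G j))"

lemma matpow_0[simp]: "matpow G 0 = mat 1" by (simp add: matpow_def)
lemma matpow_Suc: "matpow G (Suc j) = G ** matpow G j" by (simp add: matpow_def)

lemma cev_big: assumes "degree p < N"
  shows "cev p G = (\<Sum>j<N. smat (coeff p j) (matpow G j))"
proof -
  have "{..degree p} \<subseteq> {..<N}" using assms by auto
  then show ?thesis unfolding cev_def
    by (intro sum.mono_neutral_left) (auto simp: coeff_eq_0)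
qed

lemma poly_mat_cev: "poly_mat q F = cev (map_poly complex_of_real q) F"
proof -
  have "degree (map_poly complex_of_real q) < Suc (degree q)"
    by (subst degree_map_poly) auto
  then show ?thesis unfolding poly_mat_def
    by (subst cev_big[of _ "Suc (degree q)"]) (auto simp: coeff_map_poly lessThan_Suc_atMost)
qed

lemma cev_add: "cev (p + q) G = cev p G + cev q G"
proof -
  let ?N = "Suc (max (degree p) (degree q))"
  have "degree (p+q) < ?N" using degree_add_le_max[of p q] by simp
  then show ?thesis
    by (simp add: cev_big[of _ ?N] smat_add2 sum.distrib)
qed

lemma cev_smult: "cev (smult a p) G = smat a (cev p G)"
proof -
  have "degree (smult a p) < Suc (degree p)" by simp
  then show ?thesis
    by (simp add: cev_big[of _ "Suc (degree p)"] smat_sum smat_smat del: sum.lessThan_Suc)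
qed

lemma cev_minus: "cev (- p) G = smat (-1) (cev p G)"
  by (metis cev_smult smult_1_left smult_minus_left)

lemma cev_diff: "cev (p - q) G = cev p G - cev q G"
proof -
  have "cev (p - q) G = cev p G + smat (-1) (cev q G)"
    by (metis cev_add cev_minus diff_conv_add_uminus)
  moreover have "smat (-1) A = - A" for A :: "complex^'n^'n"
    by (simp add: smat_def vec_eq_iff)
  ultimately show ?thesis by simp
qed

lemma cev_pCons: "cev (pCons a p) G = smat a (mat 1) + G ** cev p G"
proof -
  let ?N = "Suc (degree p)"
  have d: "degree (pCons a p) < Suc ?N" using degree_pCons_le[of a p] by simp
  have "cev (pCons a p) G = (\<Sum>j<Suc ?N. smat (coeff (pCons a p) j) (matpow G j))"
    using cev_big[OF d] .
  also have "\<dots> = smat a (mat 1) + (\<Sum>j<?N. smat (coeff p j) (matpow G (Suc j)))"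
    by (subst sum.lessThan_Suc_shift) simp
  also have "(\<Sum>j<?N. smat (coeff p j) (matpow G (Suc j))) = G ** cev p G"
    by (simp add: cev_big[of p ?N] mmul_sum_right matpow_Suc smat_mult_right del: sum.lessThan_Suc)
  finally show ?thesis .
qed

lemma cev_0[simp]: "cev 0 G = 0" by (simp add: cev_def)

lemma cev_pCons0: "cev (pCons 0 p) G = G ** cev p G"
  by (simp add: cev_pCons)

lemma cev_mult: "cev (p * q) G = cev p G ** cev q G"
proof (induction p)
  case 0 then show ?case by simp
next
  case (pCons a p)
  have "cev (pCons a p * q) G = smat a (cev q G) + G ** cev (p*q) G"
    by (simp add: cev_add cev_smult cev_pCons0)
  also have "\<dots> = (smat a (mat 1) + G ** cev p G) ** cev q G"
    by (simp add: pCons.IH matrix_add_rdistrib matrix_mul_assoc flip: smat_mult_left)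
  finally show ?case by (simp add: cev_pCons)
qed

lemma cev_const: "cev [:c:] G = smat c (mat 1)"
  by (simp add: cev_pCons)

lemma cev_monom: "cev (monom c n) G = smat c (matpow G n)"
proof (induction n)
  case 0 then show ?case by (simp add: monom_0 cev_const)
next
  case (Suc n)
  then show ?case by (simp add: monom_Suc cev_pCons0 matpow_Suc smat_mult_right)
qed

lemma cev_sum: "cev (sum f S) G = sum (\<lambda>x. cev (f x) G) S"
  by (induction S rule: infinite_finite_induct) (auto simp: cev_add)

lemma cev_comm: "G ** cev p G = cev p G ** G"
  by (induction p) (simp_all add: cev_pCons matrix_add_ldistrib matrix_add_rdistrib matrix_mul_assoc
      flip: smat_mult_left smat_mult_right)

lemma cev_right_eig: assumes "X ** G = smat mu X"
  shows "X ** cev p G = smat (poly p mu) X"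
proof (induction p)
  case 0 then show ?case by simp
next
  case (pCons a p)
  have "X ** cev (pCons a p) G = smat a X + (X ** G) ** cev p G"
    by (simp add: cev_pCons matrix_add_ldistrib matrix_mul_assoc flip: smat_mult_right)
  also have "\<dots> = smat a X + smat mu (X ** cev p G)"
    by (simp add: assms flip: smat_mult_left)
  finally show ?case by (simp add: pCons.IH smat_smat smat_add2)
qed

lemma cev_left_eig: assumes "G ** Y = smat mu Y"
  shows "cev p G ** Y = smat (poly p mu) Y"
proof (induction p)
  case 0 then show ?case by simp
next
  case (pCons a p)
  have "cev (pCons a p) G ** Y = smat a Y + cev p G ** (G ** Y)"
    by (simp add: cev_pCons matrix_add_rdistrib matrix_mul_assoc cev_comm flip: smat_mult_left)
  also have "\<dots> = smat a Y + smat mu (cev p G ** Y)"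
    by (simp add: assms flip: smat_mult_right)
  finally show ?case by (simp add: pCons.IH smat_smat smat_add2)
qed




lemma scaleR_mmul_right: "(A::complex^_^_) ** (r *\<^sub>R B) = r *\<^sub>R (A ** B)"
  by (metis smat_mult_right smat_of_real)


lemma annih:
  fixes X0 :: "complex^'a^'b" and G :: "complex^'a^'a"
  shows "\<exists>p. p \<noteq> 0 \<and> X0 ** cev p G = 0"
proof (cases "inj (\<lambda>j. X0 ** matpow G j)")
  case False
  then obtain a b where ab: "a \<noteq> b" "X0 ** matpow G a = X0 ** matpow G b"
    unfolding inj_def by blast
  let ?p = "monom 1 a - monom 1 b :: complex poly"
  have "coeff ?p a = 1" using ab by simp
  then have "?p \<noteq> 0" by (metis coeff_0 zero_neq_one)
  moreover have "X0 ** cev ?p G = 0"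
    using ab by (simp add: cev_diff cev_monom matrix_diff_ldistrib)
  ultimately show ?thesis by blast
next
  case True
  define f where "f = (\<lambda>j. X0 ** matpow G j)"
  have "infinite (range f)" using True range_inj_infinite f_def by blast
  then have "dependent (range f)" using independent_bound by blast
  then obtain T u where T: "finite T" "T \<subseteq> range f" "(\<Sum>v\<in>T. u v *\<^sub>R v) = 0" "\<exists>v\<in>T. u v \<noteq> 0"
    unfolding dependent_explicit by blast
  define J where "J = f -` T"
  have injf: "inj f" using True f_def by simp
  have fJ: "finite J" unfolding J_def using T(1) injf by (rule finite_vimageI)
  have TJ: "T = f ` J" unfolding J_def using T(2) by auto
  obtain j0 where j0: "j0 \<in> J" "u (f j0) \<noteq> 0" using T(4) TJ by auto
  define p where "p = (\<Sum>j\<in>J. monom (complex_of_real (u (f j))) j)"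
  have "coeff p j0 = (\<Sum>j\<in>J. if j = j0 then complex_of_real (u (f j)) else 0)"
    unfolding p_def by (simp add: coeff_sum)
  also have "\<dots> = complex_of_real (u (f j0))" using fJ j0(1) by (simp add: sum.delta)
  finally have p0: "p \<noteq> 0" using j0(2) by auto
  have e1: "X0 ** cev p G = (\<Sum>j\<in>J. u (f j) *\<^sub>R f j)"
    unfolding p_def f_def
    by (simp add: cev_sum cev_monom mmul_sum_right smat_of_real scaleR_mmul_right)
  have e2: "(\<Sum>j\<in>J. u (f j) *\<^sub>R f j) = 0"
  proof -
    have ij: "inj_on f J" using inj_on_subset[OF injf subset_UNIV] .
    have "(\<Sum>v\<in>T. u v *\<^sub>R v) = (\<Sum>j\<in>J. u (f j) *\<^sub>R f j)"
      unfolding TJ sum.reindex[OF ij] by simp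
    then show ?thesis using T(3) by simp
  qed
  show ?thesis using p0 e1 e2 by (intro exI[of _ p]) simp
qed

lemma K_cev:
  fixes G :: "complex^'a^'a" and X :: "complex^'a^'b" and K :: "(complex^'a^'b) set"
  assumes cl: "\<forall>X\<in>K. \<forall>Y\<in>K. X + Y \<in> K" "\<forall>c. \<forall>X\<in>K. smat c X \<in> K" "\<forall>X\<in>K. X ** G \<in> K"
  shows "X \<in> K \<Longrightarrow> X ** cev p G \<in> K"
proof (induction p arbitrary: X)
  case 0
  then show ?case using cl(2) by (metis cev_0 smat_0 times0_right)
next
  case (pCons a p)
  have "X ** cev (pCons a p) G = smat a X + (X ** G) ** cev p G"
    by (simp add: cev_pCons matrix_add_ldistrib matrix_mul_assoc flip: smat_mult_right)
  then show ?case using pCons cl by simp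
qed

lemma eig_in_K_aux:
  fixes G :: "complex^'a^'a" and X :: "complex^'a^'b"
  assumes add: "\<And>X Y. X \<in> K \<Longrightarrow> Y \<in> K \<Longrightarrow> X + Y \<in> K"
    and sc: "\<And>c X. X \<in> K \<Longrightarrow> smat c X \<in> K"
    and mg: "\<And>X. X \<in> K \<Longrightarrow> X ** G \<in> K"
  shows "p \<noteq> 0 \<Longrightarrow> X \<in> K \<Longrightarrow> X \<noteq> 0 \<Longrightarrow> X ** cev p G = 0 \<Longrightarrow>
     \<exists>Y mu. Y \<in> K \<and> Y \<noteq> 0 \<and> Y ** G = smat mu Y"
  proof (induction "degree p" arbitrary: p X rule: less_induct)
    case (less p X)
    show ?case
    proof (cases "degree p = 0")
      case True
      then have "p = [:coeff p 0:]" by (metis degree_0_id)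
      then have "X ** cev p G = smat (coeff p 0) X"
        by (metis cev_const matrix_mul_rid smat_mult_right)
      then show ?thesis using less.prems True
        by (metis smat_eq0 \<open>p = [:coeff p 0:]\<close> pCons_0_0)
    next
      case False
      then have "\<not> constant (poly p)" by (simp add: constant_degree)
      then obtain z where "poly p z = 0" using fundamental_theorem_of_algebra by blast
      then obtain r where r: "p = [:-z, 1:] * r" using poly_eq_0_iff_dvd by (metis dvdE)
      have r0: "r \<noteq> 0" using r less.prems(1) by auto
      have "degree p = degree [:-z, 1:] + degree r" unfolding r by (rule degree_mult_eq) (use r0 in auto)
      then have dr: "degree r < degree p" by simp
      define Y where "Y = X ** cev r G"
      have YK: "Y \<in> K" unfolding Y_def using K_cev[of K G X r] add sc mg less.prems(2) by blast
      show ?thesis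
      proof (cases "Y = 0")
        case True
        then show ?thesis using less.hyps[OF dr r0 less.prems(2,3)] Y_def by auto
      next
        case False
        have "Y ** cev [:-z, 1:] G = X ** cev p G"
          unfolding Y_def r by (metis cev_mult matrix_mul_assoc mult.commute)
        also have "\<dots> = 0" using less.prems(4) .
        finally have "Y ** (smat (-z) (mat 1) + G) = 0"
          by (simp add: cev_pCons)
        then have "smat (-z) Y + Y ** G = 0"
          by (simp add: matrix_add_ldistrib flip: smat_mult_right)
        moreover have "smat (-z) Y = - smat z Y" by (simp add: smat_def vec_eq_iff)
        ultimately have "Y ** G = smat z Y"
          by (metis add.commute add_eq_0_iff2 minus_minus)
        then show ?thesis using YK False by blast
      qed
    qed
  qed

lemma eig_in_K:
  fixes G :: "complex^'a^'a" and X0 :: "complex^'a^'b"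
  assumes add: "\<And>X Y. X \<in> K \<Longrightarrow> Y \<in> K \<Longrightarrow> X + Y \<in> K"
    and sc: "\<And>c X. X \<in> K \<Longrightarrow> smat c X \<in> K"
    and mg: "\<And>X. X \<in> K \<Longrightarrow> X ** G \<in> K"
    and X0: "X0 \<in> K" "X0 \<noteq> 0"
  shows "\<exists>Y mu. Y \<in> K \<and> Y \<noteq> 0 \<and> Y ** G = smat mu Y"
proof -
  obtain p where p: "p \<noteq> 0" "X0 ** cev p G = 0" using annih by blast
  show ?thesis using eig_in_K_aux[OF add sc mg p(1) X0 p(2)] by blast
qed




lemma rank_col:
  fixes A :: "'a::field^'n^'m"
  shows "rank A = CARD('n) \<longleftrightarrow> (\<forall>x. A *v x = 0 \<longrightarrow> x = 0)"
proof -
  have "vec.dim (rows A) = CARD('n) \<longleftrightarrow> vec.span (rows A) = UNIV"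
    using vec.dim_eq_full[of "rows A"] by (simp add: vec.dimension_def card_cart_basis)
  then show ?thesis unfolding row_rank_def_gen
    by (simp flip: matrix_left_invertible_span_rows_gen matrix_left_invertible_ker)
qed

lemma vmul_rows: "y v* A = (\<Sum>i\<in>UNIV. y$i *s row i A)"
  by (simp add: vec_eq_iff vector_matrix_mult_def row_def sum_component mult.commute)

lemma rows_range: "rows A = range (\<lambda>i. row i A)"
  by (auto simp: rows_def)

lemma axis_vmul: "axis i (1::'a::comm_semiring_1) v* A = row i A"
  by (simp add: vec_eq_iff vector_matrix_mult_def axis_def row_def if_distrib if_distribR cong del: if_weak_cong)

lemma diff_vmul: "((a::'a::comm_ring_1^'m) - b) v* A = a v* A - b v* A"
  by (simp add: vec_eq_iff vector_matrix_mult_def sum_subtractf algebra_simps)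

lemma rank_row:
  fixes A :: "'a::field^'n^'m"
  shows "rank A = CARD('m) \<longleftrightarrow> (\<forall>y. y v* A = 0 \<longrightarrow> y = 0)"
proof
  let ?r = "\<lambda>i. row i A"
  assume h: "rank A = CARD('m)"
  have fr: "finite (rows A)" by (simp add: rows_range)
  have c1: "card (rows A) \<le> CARD('m)" unfolding rows_range by (rule card_image_le) simp
  have c2: "vec.dim (rows A) \<le> card (rows A)" using vec.dim_le_card[OF vec.span_superset fr] .
  have ceq: "card (rows A) = vec.dim (rows A)" using h c1 c2 unfolding row_rank_def_gen by linarith
  have ind: "vec.independent (rows A)"
    using vec.card_eq_dim[OF order.refl ceq fr] vec.span_superset by blast
  have inj: "inj ?r"
  proof -
    have "card (range ?r) = card (UNIV :: 'm set)" using ceq h unfolding row_rank_def_gen rows_range by simp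
    then show ?thesis using eq_card_imp_inj_on[of "UNIV :: 'm set" ?r] by simp
  qed
  show "\<forall>y. y v* A = 0 \<longrightarrow> y = 0"
  proof (intro allI impI)
    fix y :: "'a^'m" assume y: "y v* A = 0"
    define u where "u = (\<lambda>v. y $ (inv ?r v))"
    have "(\<Sum>v\<in>rows A. u v *s v) = (\<Sum>i\<in>UNIV. u (?r i) *s ?r i)"
      unfolding rows_range by (simp add: sum.reindex[OF inj] o_def)
    also have "\<dots> = y v* A" unfolding vmul_rows u_def using inv_f_f[OF inj] by simp
    finally have s0: "(\<Sum>v\<in>rows A. u v *s v) = 0" using y by simp
    have "\<forall>v\<in>rows A. u v = 0" using ind s0 fr vec.dependent_finite by blast
    then have "y $ i = 0" for i using inv_f_f[OF inj, of i] unfolding u_def rows_range by (metis rangeI)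
    then show "y = 0" by (simp add: vec_eq_iff)
  qed
next
  let ?r = "\<lambda>i. row i A"
  assume h: "\<forall>y. y v* A = 0 \<longrightarrow> y = 0"
  have fr: "finite (rows A)" by (simp add: rows_range)
  have inj: "inj ?r"
  proof (rule injI)
    fix i j assume e: "?r i = ?r j"
    show "i = j"
    proof (rule ccontr)
      assume ij: "i \<noteq> j"
      define y where "y = (axis i 1 - axis j 1 :: 'a^'m)"
      have "y v* A = ?r i - ?r j"
        unfolding y_def diff_vmul axis_vmul ..
      then have "y = 0" using e h by simp
      then have "y $ i = 0" by simp
      then show False using ij by (simp add: y_def axis_def)
    qed
  qed
  have ind: "vec.independent (rows A)"
  proof -
    have "u v = 0" if "(\<Sum>v\<in>rows A. u v *s v) = 0" "v \<in> rows A" for u v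
    proof -
      define y where "y = (\<chi> i. u (?r i))"
      have "(\<Sum>v\<in>rows A. u v *s v) = (\<Sum>i\<in>UNIV. u (?r i) *s ?r i)"
        unfolding rows_range by (simp add: sum.reindex[OF inj] o_def)
      also have "\<dots> = y v* A" unfolding vmul_rows y_def by simp
      finally have "y = 0" using h that(1) by simp
      then show ?thesis using that(2) unfolding rows_range y_def by (auto simp: vec_eq_iff)
    qed
    then show ?thesis using vec.dependent_finite[OF fr] by blast
  qed
  have "vec.dim (rows A) = card (rows A)" using vec.dim_eq_card_independent[OF ind] .
  also have "\<dots> = CARD('m)" unfolding rows_range using card_image[of ?r UNIV] inj by simp
  finally show "rank A = CARD('m)" unfolding row_rank_def_gen .
qed

lemma square_ker:
  fixes A :: "'a::field^'n^'n"
  shows "(\<exists>x. x \<noteq> 0 \<and> A *v x = 0) \<longleftrightarrow> (\<exists>y. y \<noteq> 0 \<and> y v* A = 0)"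
proof -
  have "(\<forall>x. A *v x = 0 \<longrightarrow> x = 0) \<longleftrightarrow> (\<exists>B. B ** A = mat 1)"
    by (simp add: matrix_left_invertible_ker)
  also have "\<dots> \<longleftrightarrow> (\<exists>B. A ** B = mat 1)" using matrix_left_right_inverse by blast
  also have "\<dots> \<longleftrightarrow> (\<exists>B. B ** transpose A = mat 1)" by (simp add: left_invertible_transpose)
  also have "\<dots> \<longleftrightarrow> (\<forall>y. transpose A *v y = 0 \<longrightarrow> y = 0)"
    by (simp add: matrix_left_invertible_ker)
  finally show ?thesis by auto
qed

lemma mat_mulv: "mat l *v v = l *s (v::'a::comm_semiring_1^'n)"
  apply (vector matrix_vector_mult_def mat_def)
  apply (simp add: if_distrib if_distribR cong del: if_weak_cong)
  done

lemma vmul_mat: "v v* mat l = l *s (v::'a::comm_semiring_1^'n)"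
  apply (vector vector_matrix_mult_def mat_def)
  apply (simp add: if_distrib if_distribR mult.commute cong del: if_weak_cong)
  done

lemma vmul_diff: "(v::'a::comm_ring_1^'n) v* (A - B) = v v* A - v v* B"
  by (simp add: vec_eq_iff vector_matrix_mult_def sum_subtractf right_diff_distrib)

lemma eig_transpose:
  fixes F :: "complex^'n^'n"
  shows "l \<in> eig F \<longleftrightarrow> (\<exists>u. u \<noteq> 0 \<and> u v* F = l *s u)"
proof -
  let ?A = "F - mat l"
  have a: "?A *v v = F *v v - l *s v" for v
    by (simp add: matrix_vector_mult_diff_rdistrib mat_mulv)
  have b: "u v* ?A = u v* F - l *s u" for u
    by (simp add: vmul_diff vmul_mat)
  show ?thesis unfolding eig_def using square_ker[of ?A] a b by simp
qed




definition tp :: "'c::comm_semiring_1^'a^'b \<Rightarrow> 'c^'b^'a \<Rightarrow> 'c" where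
  "tp Y Z = trace (Y ** Z)"

lemma tp_sym: "tp Y Z = tp Z Y"
  unfolding tp_def by (rule trace_mul_sym)

lemma trace_zero[simp]: "trace 0 = 0" by (simp add: trace_def)

lemma trace_sum: "trace (sum f S) = (\<Sum>x\<in>S. trace (f x :: 'c::comm_semiring_1^'n^'n))"
  by (induction S rule: infinite_finite_induct) (auto simp: trace_add)

lemma tp_sum_right: "tp Y (sum f S) = (\<Sum>x\<in>S. tp Y (f x))"
  unfolding tp_def by (simp add: mmul_sum_right trace_sum)

lemma tp_sum_left: "tp (sum f S) Z = (\<Sum>x\<in>S. tp (f x) Z)"
  unfolding tp_def by (simp add: mmul_sum_left trace_sum)

lemma tp_smat_right: "tp Y (smat c Z) = c * tp Y Z"
  unfolding tp_def by (simp add: trace_def smat_def matrix_matrix_mult_def sum_distrib_left mult.left_commute)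

lemma tp_zero_left[simp]: "tp 0 Z = 0" by (simp add: tp_def)

definition Emat :: "'b \<Rightarrow> 'a \<Rightarrow> complex^'a^'b" where
  "Emat i j = (\<chi> r s. if r = i \<and> s = j then 1 else 0)"

lemma if_conj0: "(if P \<and> Q then a else 0) = (if P then (if Q then a else 0) else (0::'z::zero))"
  by simp

lemma tp_Emat: "tp (Y::complex^'b^'a) (Emat i j) = Y $ j $ i"
  unfolding tp_def trace_def matrix_matrix_mult_def Emat_def
  by (simp add: if_distrib if_distribR sum.delta cong: if_cong) (simp add: if_conj0 sum.delta)

lemma tp_nondeg: assumes "\<And>Z. tp (Y::complex^'b^'a) Z = 0" shows "Y = 0"
  using assms tp_Emat by (metis vec_eq_iff zero_index)

lemma inner_tp:
  fixes Z0 Z :: "complex^'c^'d"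
  shows "inner Z0 Z = Re (tp (\<chi> c d. cnj (Z0$d$c)) Z)"
  unfolding tp_def trace_def matrix_matrix_mult_def inner_vec_def
  by (simp add: inner_complex_def Re_sum sum.swap[of _ "UNIV::'c set"])




lemma duality:
  fixes L :: "complex^'a^'b \<Rightarrow> complex^'c^'d" and M :: "complex^'d^'c \<Rightarrow> complex^'b^'a"
  assumes Ladd: "\<And>x y. L (x + y) = L x + L y" and Lsc: "\<And>c x. L (smat c x) = smat c (L x)"
    and Madd: "\<And>x y. M (x + y) = M x + M y"
    and adj: "\<And>x y. tp (M y) x = tp y (L x)"
  shows "surj L \<longleftrightarrow> inj M"
proof
  have M0: "M 0 = 0" using Madd[of 0 0] by simp
  have Mdiff: "M (a - b) = M a - M b" for a b using Madd[of "a - b" b] by simp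
  assume sL: "surj L"
  show "inj M"
  proof (rule injI)
    fix y1 y2 assume e: "M y1 = M y2"
    have "tp (y1 - y2) Z = 0" for Z
    proof -
      obtain x where "Z = L x" using sL by (metis surjD)
      then have "tp (y1 - y2) Z = tp (M (y1 - y2)) x" by (simp add: adj)
      also have "\<dots> = 0" using e Mdiff by simp
      finally show ?thesis .
    qed
    then have "y1 - y2 = 0" by (rule tp_nondeg)
    then show "y1 = y2" by simp
  qed
next
  assume iM: "inj M"
  have M0: "M 0 = 0" using Madd[of 0 0] by simp
  have L0: "L 0 = 0" using Ladd[of 0 0] by simp
  show "surj L"
  proof (rule ccontr)
    assume nS: "\<not> surj L"
    let ?S = "range L"
    have sub: "subspace ?S"
      unfolding subspace_def
    proof (intro conjI ballI allI)
      show "0 \<in> ?S" using L0 by (metis rangeI)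
    next
      fix x y assume "x \<in> ?S" "y \<in> ?S"
      then obtain a b where "x = L a" "y = L b" by blast
      then have "x + y = L (a + b)" by (simp add: Ladd)
      then show "x + y \<in> ?S" by simp
    next
      fix c :: real and x assume "x \<in> ?S"
      then obtain z where "x = L z" by blast
      then have "c *\<^sub>R x = L (smat (complex_of_real c) z)" using Lsc[of "complex_of_real c" z] by (simp add: smat_of_real)
      then show "c *\<^sub>R x \<in> ?S" by simp
    qed
    have eqS: "span ?S = ?S" using sub by (rule span_eq_iff[THEN iffD2])
    have ne: "?S \<noteq> UNIV" using nS by simp
    have "span ?S \<subset> span UNIV" unfolding eqS span_UNIV using ne by blast
    then obtain Z0 where Z0: "Z0 \<noteq> 0" "\<And>y. y \<in> span ?S \<Longrightarrow> orthogonal Z0 y"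
      using orthogonal_to_subspace_exists_gen by blast
    define Y :: "complex^'d^'c" where "Y = (\<chi> c d. cnj (Z0$d$c))"
    have tpz: "tp Y Z = 0" if Zin: "Z \<in> ?S" for Z
    proof -
      let ?c = "tp Y Z"
      obtain z where z: "Z = L z" using Zin by blast
      have "smat (cnj ?c) Z \<in> ?S" using z Lsc by (metis rangeI)
      then have "inner Z0 (smat (cnj ?c) Z) = 0" using Z0(2) span_base orthogonal_def by blast
      then have "Re (cnj ?c * ?c) = 0" using inner_tp[of Z0 "smat (cnj ?c) Z"]
        by (simp add: tp_smat_right Y_def)
      then have "Re ?c ^ 2 + Im ?c ^ 2 = 0" by (simp add: power2_eq_square)
      then show ?thesis by (simp add: complex_eq_iff add_nonneg_eq_0_iff)
    qed
    have "tp (M Y) x = 0" for x using tpz adj by simp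
    then have "M Y = 0" by (rule tp_nondeg)
    then have "Y = 0" using iM M0 by (metis injD)
    then have "Z0 = 0" unfolding Y_def by (simp add: vec_eq_iff)
    then show False using Z0(1) by simp
  qed
qed




definition outer :: "'c::comm_semiring_1^'a \<Rightarrow> 'c^'b \<Rightarrow> 'c^'b^'a" where
  "outer v y = (\<chi> a b. v$a * y$b)"

lemma outer_lmul: "A ** outer v y = outer (A *v v) y"
  by (simp add: outer_def vec_eq_iff matrix_matrix_mult_def matrix_vector_mult_def sum_distrib_right mult.assoc)

lemma outer_rmul: "outer v y ** B = outer v (y v* B)"
  by (simp add: outer_def vec_eq_iff matrix_matrix_mult_def vector_matrix_mult_def sum_distrib_left
      mult.assoc mult.left_commute mult.commute)

lemma outer_eq0: "outer v (y::'c::idom^'b) = 0 \<longleftrightarrow> v = 0 \<or> y = 0"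
  by (auto simp: outer_def vec_eq_iff)

lemma outer_scale_l: "outer (l *s v) y = smat l (outer v y)"
  by (simp add: outer_def smat_def vec_eq_iff mult.assoc)

lemma outer_scale_r: "outer v (l *s y) = smat l (outer v y)"
  by (simp add: outer_def smat_def vec_eq_iff mult.left_commute)

lemma row_mult: "(A ** B) $ a = A $ a v* B"
  by (simp add: vec_eq_iff matrix_matrix_mult_def vector_matrix_mult_def mult.commute)

lemma col_mult: "column b (A ** B) = A *v column b B"
  by (simp add: vec_eq_iff matrix_matrix_mult_def matrix_vector_mult_def column_def)

lemma smat_row: "(smat c A) $ a = c *s A $ a"
  by (simp add: smat_def vec_eq_iff)

lemma smat_col: "column b (smat c A) = c *s column b A"
  by (simp add: smat_def vec_eq_iff column_def)

lemma transpose_add: "transpose (A + B) = transpose A + transpose B"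
  by (simp add: transpose_def vec_eq_iff)

lemma transpose_zero: "transpose 0 = 0"
  by (simp add: transpose_def vec_eq_iff)

lemma transpose_eq0: "transpose A = 0 \<longleftrightarrow> A = 0"
  by (metis transpose_transpose transpose_zero)

lemma tp_cyc: "tp Y (R ** X ** P) = tp (P ** Y ** R) X"
proof -
  have "tp Y (R ** X ** P) = trace ((Y ** (R ** X)) ** P)" by (simp add: tp_def matrix_mul_assoc)
  also have "\<dots> = trace (P ** (Y ** (R ** X)))" by (rule trace_mul_sym)
  also have "\<dots> = tp (P ** Y ** R) X" by (simp add: tp_def matrix_mul_assoc)
  finally show ?thesis .
qed



theorem theoremA:
  fixes k :: nat
    and F :: "complex^'nu^'nu"
    and R :: "nat \<Rightarrow> complex^'n2^'n1"
    and q :: "nat \<Rightarrow> real poly"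
    and Hp :: "complex^'nu^'n2 \<Rightarrow> complex^'nu^'n1"
    and Hd :: "complex^'n1^'nu \<Rightarrow> complex^'n2^'nu"
    and Rl :: "complex \<Rightarrow> complex^'n2^'n1"
  assumes "k \<ge> 1"
    and HpD: "\<And>X. Hp X = (\<Sum>i=1..k. R i ** X ** poly_mat (q i) F)"
    and HdD: "\<And>Y. Hd Y = (\<Sum>i=1..k. poly_mat (q i) F ** Y ** R i)"
    and RlD: "\<And>l. Rl l = (\<Sum>i=1..k. smat (poly (map_poly complex_of_real (q i)) l) (R i))"
  shows "(surj Hp \<longleftrightarrow> (\<forall>l\<in>eig F. rank (Rl l) = CARD('n1)))
       \<and> (inj Hp \<longleftrightarrow> (\<forall>l\<in>eig F. rank (Rl l) = CARD('n2)))
       \<and> (surj Hd \<longleftrightarrow> (\<forall>l\<in>eig F. rank (Rl l) = CARD('n2)))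
       \<and> (inj Hd \<longleftrightarrow> (\<forall>l\<in>eig F. rank (Rl l) = CARD('n1)))"
proof -
  define qc where "qc i = map_poly complex_of_real (q i)" for i
  define P where "P i = poly_mat (q i) F" for i
  have Pc: "P i = cev (qc i) F" for i unfolding P_def qc_def by (rule poly_mat_cev)
  have PF: "P i ** F = F ** P i" for i unfolding Pc by (simp add: cev_comm)
  have HpP: "Hp X = (\<Sum>i=1..k. R i ** X ** P i)" for X using HpD P_def by simp
  have HdP: "Hd Y = (\<Sum>i=1..k. P i ** Y ** R i)" for Y using HdD P_def by simp
  have RlP: "Rl l = (\<Sum>i=1..k. smat (poly (qc i) l) (R i))" for l using RlD qc_def by simp
  have Hp_add: "Hp (X + Y) = Hp X + Hp Y" for X Y
    by (simp add: HpP matrix_add_ldistrib matrix_add_rdistrib sum.distrib)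
  have Hd_add: "Hd (X + Y) = Hd X + Hd Y" for X Y
    by (simp add: HdP matrix_add_ldistrib matrix_add_rdistrib sum.distrib)
  have Hp_sc: "Hp (smat c X) = smat c (Hp X)" for c X
    by (simp add: HpP smat_sum flip: smat_mult_left smat_mult_right)
  have Hd_sc: "Hd (smat c X) = smat c (Hd X)" for c X
    by (simp add: HdP smat_sum flip: smat_mult_left smat_mult_right)
  have Hp0: "Hp 0 = 0" using Hp_add[of 0 0] by simp
  have Hd0: "Hd 0 = 0" using Hd_add[of 0 0] by simp
  have Hp_diff: "Hp (X - Y) = Hp X - Hp Y" for X Y using Hp_add[of "X - Y" Y] by simp
  have Hd_diff: "Hd (X - Y) = Hd X - Hd Y" for X Y using Hd_add[of "X - Y" Y] by simp
  have adj1: "tp (Hd y) x = tp y (Hp x)" for x y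
    by (simp add: HpP HdP tp_sum_left tp_sum_right tp_cyc)
  have adj2: "tp (Hp y) x = tp y (Hd x)" for x y
    by (metis adj1 tp_sym)
  have S1: "surj Hp \<longleftrightarrow> inj Hd"
    by (rule duality[OF Hp_add Hp_sc Hd_add adj1])
  have S2: "surj Hd \<longleftrightarrow> inj Hp"
    by (rule duality[OF Hd_add Hd_sc Hp_add adj2])
  have HpF: "Hp (X ** F) = Hp X ** F" for X
    by (simp add: HpP mmul_sum_left matrix_mul_assoc[symmetric] PF)
  have HdF: "Hd (F ** Y) = F ** Hd Y" for Y
    by (simp add: HdP mmul_sum_right matrix_mul_assoc PF)
  have EP: "Hp X = Rl mu ** X" if "X ** F = smat mu X" for X mu
  proof -
    have "Hp X = (\<Sum>i=1..k. R i ** (X ** P i))" by (simp add: HpP matrix_mul_assoc)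
    also have "\<dots> = (\<Sum>i=1..k. smat (poly (qc i) mu) (R i) ** X)"
      using cev_right_eig[OF that] by (simp add: Pc flip: smat_mult_left smat_mult_right)
    also have "\<dots> = Rl mu ** X" by (simp add: RlP mmul_sum_left)
    finally show ?thesis .
  qed
  have ED: "Hd Y = Y ** Rl mu" if "F ** Y = smat mu Y" for Y mu
  proof -
    have "Hd Y = (\<Sum>i=1..k. (P i ** Y) ** R i)" by (simp add: HdP)
    also have "\<dots> = (\<Sum>i=1..k. Y ** smat (poly (qc i) mu) (R i))"
      using cev_left_eig[OF that] by (simp add: Pc flip: smat_mult_left smat_mult_right)
    also have "\<dots> = Y ** Rl mu" by (simp add: RlP mmul_sum_right)
    finally show ?thesis .
  qed
  \<comment> \<open>injectivity of Hd\<close>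
  have I1: "inj Hd \<longleftrightarrow> (\<forall>l\<in>eig F. rank (Rl l) = CARD('n1))"
  proof
    assume iH: "inj Hd"
    show "\<forall>l\<in>eig F. rank (Rl l) = CARD('n1)"
    proof (intro ballI)
      fix l assume l: "l \<in> eig F"
      then obtain v where v: "v \<noteq> 0" "F *v v = l *s v" unfolding eig_def by blast
      show "rank (Rl l) = CARD('n1)" unfolding rank_row
      proof (intro allI impI)
        fix y assume y: "y v* Rl l = 0"
        define Y where "Y = outer v y"
        have "F ** Y = smat l Y" unfolding Y_def by (simp add: outer_lmul v outer_scale_l)
        then have "Hd Y = Y ** Rl l" by (rule ED)
        also have "\<dots> = 0" unfolding Y_def by (simp add: outer_rmul y outer_eq0)
        finally have "Y = 0" using iH Hd0 by (metis injD)
        then show "y = 0" using v(1) by (simp add: Y_def outer_eq0)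
      qed
    qed
  next
    assume rc: "\<forall>l\<in>eig F. rank (Rl l) = CARD('n1)"
    show "inj Hd"
    proof (rule injI, rule ccontr)
      fix Y1 Y2 assume e: "Hd Y1 = Hd Y2" and ne: "Y1 \<noteq> Y2"
      define K where "K = {Z :: complex^'nu^'n1. Hd (transpose Z) = 0}"
      have K1: "transpose (Y1 - Y2) \<in> K" unfolding K_def using e Hd_diff by simp
      have K2: "transpose (Y1 - Y2) \<noteq> 0" using ne by (simp add: transpose_eq0)
      have c1: "A + B \<in> K" if "A \<in> K" "B \<in> K" for A B
        using that unfolding K_def by (simp add: transpose_add Hd_add)
      have c2: "smat c A \<in> K" if "A \<in> K" for c A
        using that unfolding K_def by (simp add: transpose_smat Hd_sc)
      have c3: "A ** transpose F \<in> K" if "A \<in> K" for A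
        using that unfolding K_def by (simp add: matrix_transpose_mul HdF)
      obtain Z mu where Z: "Z \<in> K" "Z \<noteq> 0" "Z ** transpose F = smat mu Z"
        using eig_in_K[of K "transpose F", OF c1 c2 c3 K1 K2] by blast
      define Y where "Y = transpose Z"
      have FY: "F ** Y = smat mu Y" unfolding Y_def
        by (metis Z(3) matrix_transpose_mul transpose_smat transpose_transpose)
      have Y0: "Y \<noteq> 0" using Z(2) by (simp add: Y_def transpose_eq0)
      have HY: "Y ** Rl mu = 0" using ED[OF FY] Z(1) by (simp add: K_def Y_def)
      obtain a b where ab: "Y $ a $ b \<noteq> 0" using Y0 by (metis vec_eq_iff zero_index)
      have "F *v column b Y = mu *s column b Y" using FY by (metis col_mult smat_col)
      moreover have "column b Y \<noteq> 0" using ab by (auto simp: column_def vec_eq_iff)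
      ultimately have "mu \<in> eig F" unfolding eig_def by blast
      then have "rank (Rl mu) = CARD('n1)" using rc by blast
      moreover have "Y $ a v* Rl mu = 0" using HY row_mult[of Y "Rl mu" a] by simp
      ultimately have "Y $ a = 0" by (simp add: rank_row)
      then show False using ab by simp
    qed
  qed
  \<comment> \<open>injectivity of Hp\<close>
  have I2: "inj Hp \<longleftrightarrow> (\<forall>l\<in>eig F. rank (Rl l) = CARD('n2))"
  proof
    assume iH: "inj Hp"
    show "\<forall>l\<in>eig F. rank (Rl l) = CARD('n2)"
    proof (intro ballI)
      fix l assume l: "l \<in> eig F"
      then obtain u where u: "u \<noteq> 0" "u v* F = l *s u" unfolding eig_transpose by blast
      show "rank (Rl l) = CARD('n2)" unfolding rank_col
      proof (intro allI impI)
        fix x assume x: "Rl l *v x = 0"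
        define X where "X = outer x u"
        have "X ** F = smat l X" unfolding X_def by (simp add: outer_rmul u outer_scale_r)
        then have "Hp X = Rl l ** X" by (rule EP)
        also have "\<dots> = 0" unfolding X_def by (simp add: outer_lmul x outer_eq0)
        finally have "X = 0" using iH Hp0 by (metis injD)
        then show "x = 0" using u(1) by (simp add: X_def outer_eq0)
      qed
    qed
  next
    assume rc: "\<forall>l\<in>eig F. rank (Rl l) = CARD('n2)"
    show "inj Hp"
    proof (rule injI, rule ccontr)
      fix X1 X2 assume e: "Hp X1 = Hp X2" and ne: "X1 \<noteq> X2"
      define K where "K = {X :: complex^'nu^'n2. Hp X = 0}"
      have K1: "X1 - X2 \<in> K" unfolding K_def using e Hp_diff by simp
      have K2: "X1 - X2 \<noteq> 0" using ne by simp
      have c1: "A + B \<in> K" if "A \<in> K" "B \<in> K" for A B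
        using that unfolding K_def by (simp add: Hp_add)
      have c2: "smat c A \<in> K" if "A \<in> K" for c A
        using that unfolding K_def by (simp add: Hp_sc)
      have c3: "A ** F \<in> K" if "A \<in> K" for A
        using that unfolding K_def by (simp add: HpF)
      obtain X mu where X: "X \<in> K" "X \<noteq> 0" "X ** F = smat mu X"
        using eig_in_K[of K F, OF c1 c2 c3 K1 K2] by blast
      have HX: "Rl mu ** X = 0" using EP[OF X(3)] X(1) by (simp add: K_def)
      obtain a b where ab: "X $ a $ b \<noteq> 0" using X(2) by (metis vec_eq_iff zero_index)
      have "X $ a v* F = mu *s X $ a" using X(3) by (metis row_mult smat_row)
      moreover have "X $ a \<noteq> 0" using ab by auto
      ultimately have "mu \<in> eig F" unfolding eig_transpose by blast
      then have "rank (Rl mu) = CARD('n2)" using rc by blast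
      moreover have "Rl mu *v column b X = 0"
      proof -
        have "column b (Rl mu ** X) = 0" using HX by (simp add: column_def vec_eq_iff)
        then show ?thesis by (simp add: col_mult)
      qed
      ultimately have "column b X = 0" by (simp add: rank_col)
      then show False using ab by (simp add: column_def vec_eq_iff)
    qed
  qed
  show ?thesis using S1 S2 I1 I2 by blast
qed

end
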